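(* Let $\Gamma\neq\mathbb N$ be a telescopic numerical semigroup. Then $(\mathrm e(\Gamma)-2)\,2^{\mathrm e(\Gamma)}+2\le \mathrm c(\Gamma)$.
   Context: A numerical semigroup is a submonoid of $(\mathbb N,+)$ with finite complement in $\mathbb N$; it has a unique minimal generating system, whose cardinality is the embedding dimension $\mathrm e(\Gamma)$. $\mathrm F(\Gamma)$ is the largest integer not in $\Gamma$, and $\mathrm c(\Gamma)=\mathrm F(\Gamma)+1$. $\langle X\rangle$ is the submonoid generated by $X$. For an arrangement $(r_0,\ldots,r_h)$ of the minimal generators, set $d_k=\gcd(r_0,\ldots,r_{k-1})$. A set $A$ of positive integers with nontrivial partition $A=A_1\cup A_2$ is the gluing of $A_1$ and $A_2$ if $\mathrm{lcm}(\gcd A_1,\gcd A_2)\in\langle A_1\rangle\cap\langle A_2\rangle$. $\Gamma$ is free for $(r_0,\ldots,r_h)$ if $h=0$, or $h\ge1$, $\{r_0,\ldots,r_h\}$ is the gluing of $\{r_0,\ldots,r_{h-1}\}$ and $\{r_h\}$, and $\langle r_0/d_h,\ldots,r_{h-1}/d_h\rangle$ is free for $(r_0/d_h,\ldots,r_{h-1}/d_h)$. $\Gamma$ is telescopic if it is free for the arrangement of its minimal generators in increasing order. *)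

theory Defs
  imports Main
begin

inductive_set gen :: "nat set \<Rightarrow> nat set" for X :: "nat set" where
  gen_zero: "0 \<in> gen X"
| gen_add: "x \<in> X \<Longrightarrow> y \<in> gen X \<Longrightarrow> x + y \<in> gen X"

definition numerical_semigroup :: "nat set \<Rightarrow> bool" where
  "numerical_semigroup S \<longleftrightarrow> 0 \<in> S \<and> (\<forall>x\<in>S. \<forall>y\<in>S. x + y \<in> S) \<and> finite (UNIV - S)"

definition min_gens :: "nat set \<Rightarrow> nat set" where
  "min_gens S = (THE X. gen X = S \<and> (\<forall>Y. Y \<subset> X \<longrightarrow> gen Y \<noteq> S))"

definition embdim :: "nat set \<Rightarrow> nat" where
  "embdim S = card (min_gens S)"

text \<open>Frobenius number (for S \<noteq> UNIV) and conductor c = F + 1.\<close>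
definition frobenius :: "nat set \<Rightarrow> nat" where
  "frobenius S = Max (UNIV - S)"

definition conductor :: "nat set \<Rightarrow> nat" where
  "conductor S = frobenius S + 1"

definition gluing :: "nat set \<Rightarrow> nat set \<Rightarrow> nat set \<Rightarrow> bool" where
  "gluing A A1 A2 \<longleftrightarrow> (\<forall>a\<in>A. 0 < a) \<and> A = A1 \<union> A2 \<and> A1 \<inter> A2 = {} \<and>
     A1 \<noteq> {} \<and> A2 \<noteq> {} \<and> lcm (Gcd A1) (Gcd A2) \<in> gen A1 \<inter> gen A2"

function free :: "nat list \<Rightarrow> bool" where
  "free [] = False"
| "free [r] = True"
| "free (r # s # rs) =
     (let xs = r # s # rs; ys = butlast xs; d = Gcd (set ys)
      in gluing (set xs) (set ys) {last xs} \<and> free (map (\<lambda>x. x div d) ys))"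
  by pat_completeness auto
termination by (relation "measure length") auto

definition telescopic :: "nat set \<Rightarrow> bool" where
  "telescopic S \<longleftrightarrow> free (sorted_list_of_set (min_gens S))"

end

theory Submission
  imports Defs
begin
lemma gen_base: "x \<in> X \<Longrightarrow> x \<in> gen X"
  using gen.gen_add[of x X 0] gen.gen_zero by simp

lemma gen_add_closed: "x \<in> gen X \<Longrightarrow> y \<in> gen X \<Longrightarrow> x + y \<in> gen X"
  by (induction x rule: gen.induct) (auto simp: add.assoc intro: gen.intros)

lemma gen_least: assumes "X \<subseteq> S" "0 \<in> S" "\<forall>a\<in>S. \<forall>b\<in>S. a+b \<in> S" shows "gen X \<subseteq> S"
proof
  fix x assume "x \<in> gen X" then show "x \<in> S" by induction (use assms in auto)
qed

lemma gen_mono: "X \<subseteq> Y \<Longrightarrow> gen X \<subseteq> gen Y"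
  by (rule gen_least) (auto intro: gen_base gen.gen_zero gen_add_closed)

lemma gen_mult: "x \<in> gen X \<Longrightarrow> k * x \<in> gen X"
  by (induction k) (auto intro: gen.gen_zero gen_add_closed)

lemma gen_insert: "x \<in> gen (insert r Y) \<Longrightarrow> \<exists>a k. a \<in> gen Y \<and> x = a + k * r"
proof (induction x rule: gen.induct)
  case gen_zero show ?case using gen.gen_zero by force
next
  case (gen_add x y)
  then obtain a k where a: "a \<in> gen Y" "y = a + k*r" by blast
  show ?case
  proof (cases "x = r")
    case True then show ?thesis using a by (intro exI[of _ a] exI[of _ "Suc k"]) auto
  next
    case False then have "x \<in> Y" using gen_add by auto
    then show ?thesis using a by (intro exI[of _ "x + a"] exI[of _ k]) (auto intro: gen.gen_add)
  qed
qed

lemma gen_scale: "gen ((*) d ` Y) = (*) d ` gen Y"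
proof
  show "gen ((*) d ` Y) \<subseteq> (*) d ` gen Y"
  proof
    fix x assume "x \<in> gen ((*) d ` Y)" then show "x \<in> (*) d ` gen Y"
    proof induction
      case gen_zero then show ?case using gen.gen_zero by force
    next
      case (gen_add x y) then obtain a b where "a\<in>Y" "x = d*a" "b \<in> gen Y" "y = d*b" by auto
      then show ?case by (auto intro!: image_eqI[of _ _ "a+b"] gen.gen_add simp: algebra_simps)
    qed
  qed
next
  show "(*) d ` gen Y \<subseteq> gen ((*) d ` Y)"
  proof clarify
    fix x assume "x \<in> gen Y" then show "d*x \<in> gen ((*) d ` Y)"
      by induction (auto intro: gen.intros simp: distrib_left)
  qed
qed

lemma gen_dvd: "x \<in> gen X \<Longrightarrow> Gcd X dvd x"
  by (induction rule: gen.induct) (auto simp: Gcd_dvd)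

lemma gen_nonzero: "x \<in> gen X \<Longrightarrow> x \<noteq> 0 \<Longrightarrow> \<exists>y\<in>X. y \<noteq> 0 \<and> y \<le> x \<and> x - y \<in> gen X"
proof (induction rule: gen.induct)
  case gen_zero then show ?case by simp
next
  case (gen_add x y)
  show ?case
  proof (cases "x = 0")
    case True then show ?thesis using gen_add by auto
  next
    case False then show ?thesis using gen_add by (intro bexI[of _ x]) auto
  qed
qed

lemma gen_absorb: "x \<in> gen Y \<Longrightarrow> gen (insert x Y) = gen Y"
  using gen_least[of "insert x Y" "gen Y"] gen_mono[of Y "insert x Y"] gen.gen_zero gen_add_closed gen_base
  by blast

definition atoms :: "nat set \<Rightarrow> nat set" where
  "atoms S = {x\<in>S. x \<noteq> 0 \<and> (\<forall>a\<in>S. \<forall>b\<in>S. x = a + b \<longrightarrow> a = 0 \<or> b = 0)}"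

lemma atoms_gen: assumes "numerical_semigroup S" shows "gen (atoms S) = S"
proof
  show "gen (atoms S) \<subseteq> S" using assms unfolding numerical_semigroup_def
    by (intro gen_least) (auto simp: atoms_def)
next
  have "x \<in> S \<longrightarrow> x \<in> gen (atoms S)" for x
  proof (induction x rule: less_induct)
    case (less x)
    show ?case
    proof
      assume x: "x \<in> S"
      show "x \<in> gen (atoms S)"
      proof (cases "x \<in> atoms S \<or> x = 0")
        case True then show ?thesis using gen_base gen.gen_zero by auto
      next
        case False
        then obtain a b where "a \<in> S" "b \<in> S" "x = a + b" "a \<noteq> 0" "b \<noteq> 0"
          using x unfolding atoms_def by auto
        then show ?thesis using less[of a] less[of b] gen_add_closed by auto
      qed
    qed
  qed
  then show "S \<subseteq> gen (atoms S)" by auto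
qed

lemma atoms_minimal: assumes "numerical_semigroup S" "Y \<subset> atoms S" shows "gen Y \<noteq> S"
proof
  assume g: "gen Y = S"
  obtain x where x: "x \<in> atoms S" "x \<notin> Y" using assms(2) by auto
  then have "x \<in> gen Y" "x \<noteq> 0" using g by (auto simp: atoms_def)
  then obtain y where y: "y \<in> Y" "y \<noteq> 0" "y \<le> x" "x - y \<in> gen Y" using gen_nonzero by blast
  have "y \<in> S" using y(1) gen_base g by auto
  have xa: "\<forall>a\<in>S. \<forall>b\<in>S. x = a + b \<longrightarrow> a = 0 \<or> b = 0" using x(1) by (simp add: atoms_def)
  have "x - y \<in> S" using y(4) g by simp
  then have "x - y = 0" using xa[rule_format, of y "x - y"] \<open>y \<in> S\<close> y(2,3) by simp
  then show False using x y by auto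
qed

lemma minimal_is_atoms:
  assumes ns: "numerical_semigroup S" and g: "gen X = S" and m: "\<forall>Y. Y \<subset> X \<longrightarrow> gen Y \<noteq> S"
  shows "X = atoms S"
proof -
  have XS: "X \<subseteq> S" using g gen_base by auto
  have AX: "atoms S \<subseteq> X"
  proof
    fix x assume x: "x \<in> atoms S"
    then have "x \<in> gen X" "x \<noteq> 0" using g by (auto simp: atoms_def)
    then obtain y where y: "y \<in> X" "y \<noteq> 0" "y \<le> x" "x - y \<in> gen X" using gen_nonzero by blast
    have xa: "\<forall>a\<in>S. \<forall>b\<in>S. x = a + b \<longrightarrow> a = 0 \<or> b = 0" using x by (simp add: atoms_def)
    have "x - y \<in> S" "y \<in> S" using y(1,4) g XS by auto
    then have "x - y = 0" using xa[rule_format, of y "x - y"] y(2,3) by simp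
    then show "x \<in> X" using y by auto
  qed
  show ?thesis
  proof (rule ccontr)
    assume "X \<noteq> atoms S"
    then obtain x where x: "x \<in> X" "x \<notin> atoms S" using AX by auto
    have "gen (X - {x}) = S"
    proof
      show "gen (X - {x}) \<subseteq> S" using g gen_mono[of "X - {x}" X] by auto
      show "S \<subseteq> gen (X - {x})" using atoms_gen[OF ns] gen_mono[of "atoms S" "X - {x}"] AX x by auto
    qed
    then show False using m x by auto
  qed
qed

lemma min_gens_props:
  assumes ns: "numerical_semigroup S"
  shows "gen (min_gens S) = S" "\<forall>Y. Y \<subset> min_gens S \<longrightarrow> gen Y \<noteq> S"
proof -
  have "\<exists>!X. gen X = S \<and> (\<forall>Y. Y \<subset> X \<longrightarrow> gen Y \<noteq> S)"
  proof (rule ex1I[of _ "atoms S"])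
    show "gen (atoms S) = S \<and> (\<forall>Y. Y \<subset> atoms S \<longrightarrow> gen Y \<noteq> S)"
      using atoms_gen[OF ns] atoms_minimal[OF ns] by blast
    fix X assume "gen X = S \<and> (\<forall>Y. Y \<subset> X \<longrightarrow> gen Y \<noteq> S)"
    then show "X = atoms S" using minimal_is_atoms[OF ns] by blast
  qed
  then have h: "gen (min_gens S) = S \<and> (\<forall>Y. Y \<subset> min_gens S \<longrightarrow> gen Y \<noteq> S)"
    unfolding min_gens_def by (rule theI')
  then show "gen (min_gens S) = S" by (rule conjunct1)
  from h show "\<forall>Y. Y \<subset> min_gens S \<longrightarrow> gen Y \<noteq> S" by (rule conjunct2)
qed

lemma min_gens_indep:
  assumes ns: "numerical_semigroup S" and x: "x \<in> min_gens S"
  shows "x \<notin> gen (min_gens S - {x})"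
proof
  assume "x \<in> gen (min_gens S - {x})"
  then have "gen (min_gens S - {x}) = gen (min_gens S)"
    using gen_absorb[of x "min_gens S - {x}"] x by (simp add: insert_absorb)
  then show False using min_gens_props[OF ns] x by auto
qed

lemma min_gens_pos:
  assumes ns: "numerical_semigroup S" and x: "x \<in> min_gens S" shows "0 < x"
  using min_gens_indep[OF ns x] gen.gen_zero by (cases x) auto

function G :: "nat list \<Rightarrow> int" where
  "G [] = 0"
| "G [r] = -1"
| "G (r # s # rs) =
     (let xs = r # s # rs; ys = butlast xs; d = Gcd (set ys)
      in int d * G (map (\<lambda>x. x div d) ys) + (int d - 1) * int (last xs))"
  by pat_completeness auto
termination by (relation "measure length") auto

definition indep :: "nat list \<Rightarrow> bool" where
  "indep xs \<longleftrightarrow> (\<forall>i<length xs. xs!i \<notin> gen (set (take i xs)))"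

lemma indep_snoc: "indep (ys @ [r]) \<Longrightarrow> indep ys \<and> r \<notin> gen (set ys)"
  unfolding indep_def
proof (intro conjI allI impI)
  assume h: "\<forall>i<length (ys @ [r]). (ys @ [r]) ! i \<notin> gen (set (take i (ys @ [r])))"
  fix i assume "i < length ys"
  then show "ys ! i \<notin> gen (set (take i ys))" using h[rule_format, of i] by (simp add: nth_append)
next
  assume h: "\<forall>i<length (ys @ [r]). (ys @ [r]) ! i \<notin> gen (set (take i (ys @ [r])))"
  show "r \<notin> gen (set ys)" using h[rule_format, of "length ys"] by simp
qed

lemma indep_scale: "indep (map ((*) d) ys) \<Longrightarrow> indep ys"
  unfolding indep_def
proof (intro allI impI)
  fix i assume h: "\<forall>i<length (map ((*) d) ys). map ((*) d) ys ! i \<notin> gen (set (take i (map ((*) d) ys)))"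
    and i: "i < length ys"
  show "ys ! i \<notin> gen (set (take i ys))"
  proof
    assume "ys ! i \<in> gen (set (take i ys))"
    then have "d * ys ! i \<in> gen ((*) d ` set (take i ys))" unfolding gen_scale by blast
    then show False using h[rule_format, of i] i by (simp add: take_map)
  qed
qed

lemma arith_bound:
  fixes d G' L r :: int and m :: nat
  assumes "d \<ge> 2" "G' \<ge> (int m - 2) * 2^m + 1" "L \<ge> 2^m - 1" "r \<ge> d * L + 1" "m \<ge> 1"
  shows "d * G' + (d - 1) * r \<ge> (int m - 1) * 2^(Suc m) + 1"
proof -
  have P: "(2::int)^m \<ge> 2" using assms(5)
    by (metis Suc_le_eq power_increasing power_one_right zero_less_numeral of_nat_numeral one_le_numeral)
  have G1: "G' \<ge> -1"
  proof (cases "m = 1")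
    case True then show ?thesis using assms(2) by simp
  next
    case False then have "int m - 2 \<ge> 0" using assms(5) by simp
    then have "(int m - 2) * 2^m \<ge> 0" by simp
    then show ?thesis using assms(2) by simp
  qed
  have L0: "L \<ge> 1" using assms(3) P by simp
  have "d * L \<ge> 2 * L" using assms(1) L0 by (simp add: mult_right_mono)
  then have r1: "r \<ge> 2 * L + 1" using assms(4) by linarith
  have "r \<ge> 1" using r1 L0 by simp
  then have "(d - 2) * (G' + r) \<ge> 0" using assms(1) G1 by simp
  moreover have "d * G' + (d - 1) * r = 2 * G' + r + (d - 2) * (G' + r)" by (simp add: algebra_simps)
  moreover have "2 * G' + r \<ge> (int m - 1) * 2^(Suc m) + 1"
    using assms(2,3) r1 by (simp add: algebra_simps)
  ultimately show ?thesis by linarith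
qed

lemma main:
  "free xs \<Longrightarrow> sorted_wrt (<) xs \<Longrightarrow> (\<forall>x\<in>set xs. 0 < x) \<Longrightarrow> Gcd (set xs) = 1 \<Longrightarrow> indep xs \<Longrightarrow>
   (\<forall>x\<in>gen (set xs). int x \<noteq> G xs) \<and> (int (length xs) - 2) * 2 ^ length xs + 1 \<le> G xs
   \<and> 2 ^ length xs - 1 \<le> int (last xs)"
proof (induction xs rule: free.induct)
  case 1 then show ?case by simp
next
  case (2 r) then show ?case by simp
next
  case (3 r s rs)
  define xs where "xs = r # s # rs"
  define ys where "ys = butlast xs"
  define r0 where "r0 = last xs"
  define d where "d = Gcd (set ys)"
  define ys' where "ys' = map (\<lambda>x. x div d) ys"
  have xs_eq: "xs = ys @ [r0]" unfolding ys_def r0_def xs_def by simp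
  have ys_ne: "ys \<noteq> []" unfolding ys_def xs_def by simp
  have fr: "gluing (set xs) (set ys) {r0}" "free ys'"
    using "3.prems"(1) unfolding xs_def ys_def r0_def ys'_def d_def by (simp_all add: Let_def)
  have Gxs: "G xs = int d * G ys' + (int d - 1) * int r0"
    unfolding xs_def ys_def r0_def ys'_def d_def by (simp add: Let_def)
  have pos: "\<forall>x\<in>set ys. 0 < x" using "3.prems"(3) xs_eq unfolding xs_def by (metis Un_iff set_append)
  have r0pos: "0 < r0" using "3.prems"(3) xs_eq unfolding xs_def by (metis Un_iff set_append list.set_intros(1))
  have dvd: "\<forall>x\<in>set ys. d dvd x" unfolding d_def by (simp add: Gcd_dvd)
  have d0: "d \<noteq> 0"
  proof
    assume "d = 0"
    then have "set ys \<subseteq> {0}" unfolding d_def by simp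
    then show False using pos ys_ne by (cases ys) auto
  qed
  have ys_map: "ys = map ((*) d) ys'"
    unfolding ys'_def using dvd by (induction ys) auto
  have set_ys: "set ys = (*) d ` set ys'" using ys_map by simp
  have "d = d * Gcd (set ys')"
    using Gcd_mult[of d "set ys'"] set_ys unfolding d_def by simp
  then have gcd1: "Gcd (set ys') = 1" using d0 by simp
  have sorted_ys: "sorted_wrt (<) ys" using "3.prems"(2) xs_eq unfolding xs_def
    by (metis sorted_wrt_append)
  have sorted': "sorted_wrt (<) ys'"
  proof -
    have "sorted_wrt (<) (map ((*) d) ys')" using sorted_ys ys_map by simp
    then have "sorted_wrt (\<lambda>x y. 0 < d \<and> x < y) ys'" by (simp add: sorted_wrt_map)
    then show ?thesis by (rule sorted_wrt_mono_rel[rotated]) auto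
  qed
  have pos': "\<forall>x\<in>set ys'. 0 < x" using pos set_ys by auto
  have indep_xs: "indep (ys @ [r0])" using "3.prems"(5) xs_eq unfolding xs_def by simp
  have indep': "indep ys'" using indep_snoc[OF indep_xs] ys_map indep_scale by metis
  have r0_notin: "r0 \<notin> gen (set ys)" using indep_snoc[OF indep_xs] by simp
  have IH: "(\<forall>x\<in>gen (set ys'). int x \<noteq> G ys') \<and> (int (length ys') - 2) * 2 ^ length ys' + 1 \<le> G ys'
      \<and> 2 ^ length ys' - 1 \<le> int (last ys')"
    using "3.IH"[OF xs_def ys_def d_def] fr(2) sorted' pos' gcd1 indep' unfolding ys'_def by blast
  have cop: "coprime d r0"
  proof -
    have "Gcd (set xs) = gcd r0 d" using xs_eq unfolding d_def by simp
    then show ?thesis using "3.prems"(4) unfolding xs_def by (simp add: coprime_iff_gcd_eq_1 gcd.commute)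
  qed
  have "lcm d r0 \<in> gen (set ys)" using fr(1) unfolding gluing_def d_def by simp
  moreover have "lcm d r0 = d * r0" using cop by (simp add: lcm_coprime)
  ultimately have "d * r0 \<in> (*) d ` gen (set ys')" using set_ys gen_scale by simp
  then have r0_in: "r0 \<in> gen (set ys')" using d0 by auto
  have d2: "d \<ge> 2"
  proof (rule ccontr)
    assume "\<not> d \<ge> 2" then have "d = 1" using d0 by simp
    then have "r0 \<in> gen (set ys)" using r0_in set_ys by simp
    then show False using r0_notin by simp
  qed
  have "last ys < r0" using "3.prems"(2) xs_eq ys_ne unfolding xs_def
    by (metis last_in_set list.set_intros(1) sorted_wrt_append)
  moreover have "last ys = d * last ys'" using ys_map ys_ne by (simp add: last_map)
  ultimately have "d * last ys' + 1 \<le> r0" by simp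
  then have "int (d * last ys' + 1) \<le> int r0" by (simp only: of_nat_le_iff)
  then have r0_ge: "int r0 \<ge> int d * int (last ys') + 1" by simp
  have len: "length ys' = length xs - 1" "length ys' \<ge> 1" using ys_map xs_eq ys_ne by (auto simp: Suc_le_eq)
  have bound: "(int (length ys') - 1) * 2 ^ Suc (length ys') + 1 \<le> G xs"
    unfolding Gxs using arith_bound[where d="int d" and m="length ys'" and L="int (last ys')" and r="int r0"] IH d2 r0_ge len(2)
    by simp
  have lastb: "2 ^ Suc (length ys') - 1 \<le> int r0"
  proof -
    have "int d * int (last ys') \<ge> 2 * int (last ys')" using d2 by (simp add: mult_right_mono)
    then show ?thesis using IH r0_ge by simp
  qed
  have gap: "\<forall>x\<in>gen (set xs). int x \<noteq> G xs"
  proof (intro ballI notI)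
    fix x assume x: "x \<in> gen (set xs)" and eq: "int x = G xs"
    have "x \<in> gen (insert r0 (set ys))" using x xs_eq by simp
    then obtain a k where ak: "a \<in> gen (set ys)" "x = a + k * r0" using gen_insert by blast
    then obtain a' where a': "a' \<in> gen (set ys')" "a = d * a'" using set_ys gen_scale by auto
    have e1: "int d * int a' + int k * int r0 = int d * G ys' + (int d - 1) * int r0"
      using eq ak a' Gxs by simp
    then have e2: "(int k - int d + 1) * int r0 = int d * (G ys' - int a')" by (simp add: algebra_simps)
    then have "int d dvd (int k - int d + 1) * int r0" by simp
    moreover have "coprime (int d) (int r0)" using cop by simp
    ultimately have "int d dvd (int k - int d + 1)" using coprime_dvd_mult_left_iff by blast
    then obtain t where t: "int k - int d + 1 = int d * t" by blast
    have "t \<ge> 0"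
    proof (rule ccontr)
      assume "\<not> t \<ge> 0" then have "t \<le> -1" by simp
      then have "int d * t \<le> int d * (-1)" by (rule mult_left_mono) simp
      then have "int d * t \<le> - int d" by simp
      then show False using t by simp
    qed
    have "int d * (G ys' - int a') = int d * (t * int r0)" using e2[unfolded t] by (metis mult.assoc)
    then have "G ys' = int a' + t * int r0" using d0 by simp
    moreover have "a' + nat t * r0 \<in> gen (set ys')" using a'(1) r0_in gen_mult gen_add_closed by blast
    ultimately show False using IH \<open>t \<ge> 0\<close> by auto
  qed
  have "length xs = Suc (length ys')" using len by simp
  then show ?case using gap bound lastb xs_eq unfolding xs_def[symmetric]
    by (simp add: algebra_simps)
qed

lemma conductor_ge:
  assumes ns: "numerical_semigroup S" and g: "g \<notin> S"
  shows "g + 1 \<le> conductor S"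
proof -
  have "finite (UNIV - S)" using ns by (simp add: numerical_semigroup_def)
  then have "g \<le> Max (UNIV - S)" using g by (intro Max_ge) auto
  then show ?thesis by (simp add: conductor_def frobenius_def)
qed

theorem proposition4p2:
  fixes S :: "nat set"
  assumes "numerical_semigroup S" and "S \<noteq> UNIV" and "telescopic S"
  shows "(embdim S - 2) * 2 ^ embdim S + 2 \<le> conductor S"
proof -
  note ns = assms(1)
  define M where "M = min_gens S"
  define L where "L = sorted_list_of_set M"
  have frL: "free L" using assms(3) unfolding telescopic_def L_def M_def .
  have finM: "finite M"
  proof (rule ccontr)
    assume "\<not> finite M" then have "L = []" unfolding L_def by simp
    then show False using frL by simp
  qed
  have setL: "set L = M" and sortL: "sorted_wrt (<) L" and distL: "distinct L"
    and lenL: "length L = embdim S"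
    using finM unfolding L_def embdim_def M_def by auto
  have genM: "gen M = S" using min_gens_props[OF ns] unfolding M_def by simp
  have posL: "\<forall>x\<in>set L. 0 < x" using min_gens_pos[OF ns] setL unfolding M_def by auto
  have gcdL: "Gcd (set L) = 1"
  proof -
    have "finite (UNIV - S)" using ns by (simp add: numerical_semigroup_def)
    then obtain N where N: "\<forall>n\<in>UNIV - S. n < N" using finite_nat_set_iff_bounded by blast
    then have "N \<in> S" "N + 1 \<in> S" by (metis DiffI UNIV_I less_irrefl, metis DiffI UNIV_I less_add_one not_less_iff_gr_or_eq)
    then have "Gcd M dvd N" "Gcd M dvd N + 1" using gen_dvd genM by auto
    then have "Gcd M dvd 1" using dvd_add_right_iff by blast
    then show ?thesis using setL by simp
  qed
  have indL: "indep L"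
    unfolding indep_def
  proof (intro allI impI)
    fix i assume i: "i < length L"
    have "L ! i \<notin> set (take i L)" using distL i
      by (auto simp: in_set_conv_nth nth_eq_iff_index_eq)
    then have "set (take i L) \<subseteq> M - {L ! i}" using setL set_take_subset by fastforce
    then have "gen (set (take i L)) \<subseteq> gen (M - {L ! i})" by (rule gen_mono)
    moreover have "L ! i \<notin> gen (M - {L ! i})"
      using min_gens_indep[OF ns, of "L ! i"] setL nth_mem[OF i] unfolding M_def by auto
    ultimately show "L ! i \<notin> gen (set (take i L))" by blast
  qed
  have mainL: "(\<forall>x\<in>S. int x \<noteq> G L) \<and> (int (length L) - 2) * 2 ^ length L + 1 \<le> G L"
    using main[OF frL sortL posL gcdL indL] setL genM by simp
  have "\<exists>g. g \<notin> S \<and> (embdim S - 2) * 2 ^ embdim S + 1 \<le> g"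
  proof (cases "embdim S \<ge> 2")
    case True
    have "(int (embdim S) - 2) * 2 ^ embdim S \<ge> 0" using True by simp
    then have G1: "G L \<ge> 1" using mainL lenL by simp
    define g where "g = nat (G L)"
    have gG: "int g = G L" using G1 unfolding g_def by simp
    then have gS: "g \<notin> S" using mainL by auto
    have eq: "int ((embdim S - 2) * 2 ^ embdim S + 1) = (int (embdim S) - 2) * 2 ^ embdim S + 1"
      using True by (simp add: of_nat_diff)
    have "(int (embdim S) - 2) * 2 ^ embdim S + 1 \<le> G L" using mainL lenL by simp
    then have "int ((embdim S - 2) * 2 ^ embdim S + 1) \<le> int g" using gG eq by linarith
    then have "(embdim S - 2) * 2 ^ embdim S + 1 \<le> g" by (simp only: of_nat_le_iff)
    with gS show ?thesis by blast
  next
    case False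
    obtain g where g: "g \<notin> S" using assms(2) by auto
    have "0 \<in> S" using ns by (simp add: numerical_semigroup_def)
    then have "g \<ge> 1" using g by (cases g) auto
    then show ?thesis using g False by (intro exI[of _ g]) auto
  qed
  then obtain g where "g \<notin> S" "(embdim S - 2) * 2 ^ embdim S + 1 \<le> g" by blast
  then show ?thesis using conductor_ge[OF ns] by fastforce
qed

end
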